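(* Let $(K,W)$ be either $(K^+_{m,n},W^+_{m,n})$ or $(K_{m,n},W_{m,n})$, let $P$ be a simple $K$-module and $\lambda\in\mathbb{C}^n$. Then: (1) $\sigma_\lambda^2=0$ on $F(P,M(\lambda))$; (2) for $r\in\{0,\dots,m\}$ (with $\lambda=\mathbf{0}$ if $r\neq m$), $\sigma_\lambda(F(P,L(V(r)\otimes N(\lambda))))=0$ if and only if $(r;\lambda)=(m;(-1,\dots,-1))$.
   Context: All vector spaces are over $\mathbb{C}$; modules are $\mathbb{Z}_2$-graded, simple means no graded submodules other than $0$ and itself. Fix $m,n\in\mathbb{Z}_{\ge0}$, not both zero. $A^+_{m,n}=\mathbb{C}[t_1,\dots,t_m]\otimes\Lambda(\xi_1,\dots,\xi_n)$, $A_{m,n}=\mathbb{C}[t_1^{\pm1},\dots,t_m^{\pm1}]\otimes\Lambda(\xi_1,\dots,\xi_n)$ ($t_i$ even, $\xi_j$ odd). $W^+_{m,n}$ (resp. $W_{m,n}$) is the Lie superalgebra of super-derivations of $A^+_{m,n}$ (resp. $A_{m,n}$); $K^+_{m,n}$ (resp. $K_{m,n}$) is the super Weyl algebra of operators on $A^+_{m,n}$ (resp. $A_{m,n}$) generated by multiplication by $t_i$ (resp. $t_i^{\pm1}$), $\xi_j$ and by $\partial_{t_i}=\partial/\partial t_i$, $\partial_{\xi_j}=\partial/\partial\xi_j$. $\mathfrak{gl}(m,n)$ has matrix units $E_{a,b}$, even part $\mathfrak{gl}(m,n)_0=\mathfrak{gl}_m\oplus\mathfrak{gl}_n$ ($\mathfrak{gl}_m=\mathrm{span}\{E_{i,k}:i,k\le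 m\}$, $\mathfrak{gl}_n\cong\mathrm{span}\{E_{m+l,m+j}\}$ via $E_{l,j}\mapsto E_{m+l,m+j}$), odd part spanned by $E_{i,m+j},E_{m+j,i}$. There is a Lie superalgebra homomorphism $\pi:W\to K\otimes U(\mathfrak{gl}(m,n))$ with $\pi(t^\alpha\xi_I\partial_{t_i})=t^\alpha\xi_I\partial_{t_i}\otimes1+\sum_{s=1}^m\partial_{t_s}(t^\alpha\xi_I)\otimes E_{s,i}+(-1)^{|I|-1}\sum_{l=1}^n\partial_{\xi_l}(t^\alpha\xi_I)\otimes E_{m+l,i}$, $\pi(t^\alpha\xi_I\partial_{\xi_j})=t^\alpha\xi_I\partial_{\xi_j}\otimes1+\sum_{s=1}^m\partial_{t_s}(t^\alpha\xi_I)\otimes E_{s,m+j}+(-1)^{|I|-1}\sum_{l=1}^n\partial_{\xi_l}(t^\alpha\xi_I)\otimes E_{m+l,m+j}$ (here $t^\alpha$ with $\alpha\in\mathbb{Z}_{\ge0}^m$ resp. $\mathbb{Z}^m$, $\xi_I$ the increasing product over $I\subset\{1,\dots,n\}$, and derivatives of $t^\alpha\xi_I$ are multiplication operators), and for a $K$-module $P$ and a $\mathfrak{gl}(m,n)$-module $M$, $F(P,M)=P\otimes M$ is a $W$-module via $x\cdot(u\otimes v)=\pi(x)(u\otimes v)$, $(a\otimes b)(u\otimes v)=(-1)^{|b||u|}au\otimes bv$. For $\lambda\in\mathbb{C}^n$: $e_1,\dots,e_n$ standard basis of $\mathbb{Z}^n$, $|\mu|=\sum_j\mu_j$, $\mathbf{0}=(0,\dots,0)$;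 $S(\lambda)=X_1\times\dots\times X_n$ with $X_j=\lambda_j+\mathbb{Z}$ if $\lambda_j\notin\mathbb{Z}$, $X_j=\mathbb{Z}_{\ge0}$ if $\lambda_j\in\mathbb{Z}_{\ge0}$, $X_j=\{-1,-2,\dots\}$ if $\lambda_j\in\{-1,-2,\dots\}$; $W(\lambda)$ has basis $\{y(\lambda'):\lambda'\in S(\lambda)\}$, $y(\mu)=0$ for $\mu\notin S(\lambda)$, $\mathfrak{gl}_n$ acting by $E_{l,j}y(\lambda')=\lambda'_jy(\lambda'-e_j+e_l)$. $V(r)=\Lambda^r(\mathbb{C}^m)$ with natural $\mathfrak{gl}_m$-action ($e_1,\dots,e_m$ standard basis of $\mathbb{C}^m$). $M(\lambda)=\bigoplus_{r=0}^mV(r)\otimes W(\lambda)$, spanned by $e_{i_1}\wedge\dots\wedge e_{i_r}y(\lambda')$, with parity $|\lambda-\lambda'|\bmod 2$; it is a $\mathfrak{gl}(m,n)$-module with $\mathfrak{gl}(m,n)_0$ acting by tensor product and $E_{i,m+j}\cdot e_{i_1}\wedge\dots\wedge e_{i_r}y(\lambda')=(-1)^r\lambda'_je_i\wedge e_{i_1}\wedge\dots\wedge e_{i_r}y(\lambda'-e_j)$, $E_{m+j,i}\cdot e_{i_1}\wedge\dots\wedge e_{i_r}y(\lambda')=0$ if $i\notin\{i_1,\dots,i_r\}$ and $=(-1)^{r-s}e_{i_1}\wedge\dots\wedge\widehat{e_{i_s}}\wedge\dots\wedge e_{i_r}y(\lambda'+e_j)$ if $i=i_s$. Notation: $L(V(m)\otimes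 N(\lambda))$ denotes the $\mathfrak{gl}(m,n)$-submodule $\mathrm{span}\{e_{i_1}\wedge\dots\wedge e_{i_r}y(\lambda'):0\le r\le m,\ \lambda'\in S(\lambda),\ m+|\lambda|=r+|\lambda'|\}$ of $M(\lambda)$, and for $r\in\{0,\dots,m\}$, $L(V(r)\otimes N(\mathbf{0}))$ denotes the submodule $\mathrm{span}\{e_{i_1}\wedge\dots\wedge e_{i_{r'}}y(\alpha):0\le r'\le r,\ \alpha\in\mathbb{Z}_{\ge0}^n,\ r=r'+|\alpha|\}$ of $M(\mathbf{0})$ (these are simple modules isomorphic to the simple tops of the corresponding Kac modules). Define operators on $M(\lambda)$: $e_i\wedge(e_{i_1}\wedge\dots\wedge e_{i_r}y(\lambda'))=e_i\wedge e_{i_1}\wedge\dots\wedge e_{i_r}y(\lambda')$ and $\tau_j(e_{i_1}\wedge\dots\wedge e_{i_r}y(\lambda'))=(-1)^re_{i_1}\wedge\dots\wedge e_{i_r}y(\lambda'+e_j)$. Define $\sigma_\lambda:F(P,M(\lambda))\to F(P,M(\lambda))$ by $\sigma_\lambda(u\otimes v)=\sum_{s=1}^m\partial_{t_s}u\otimes e_s\wedge v+(-1)^{|u|-1}\sum_{l=1}^n\partial_{\xi_l}u\otimes\tau_l(v)$. *)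

theory Defs
  imports Complex_Main "HOL-Library.Function_Algebras"
begin

text \<open>
  Even variables t_1..t_m and odd variables xi_1..xi_n are indexed by
  naturals in {1..m} and {1..n}.  An element lambda of C^n is a function nat => complex,
  of which only the values on {1..n} matter.

  A Z2-graded K-module P is a complex vector space (carrier type 'p with scalar
  multiplication sc), with a linear grading involution gam (gam = id on P_0,
  gam = -id on P_1), and linear operators
    T i  (mult. by t_i),  Ti i (mult. by t_i^{-1}, only used in the Laurent case),
    Dt i (d/dt_i),  X j (mult. by xi_j),  Dx j (d/dxi_j),
  satisfying the defining relations of the super Weyl algebra K^+_{m,n}
  (resp. K_{m,n} when laurent = True, where in addition Ti i is a two-sided inverse
  of T i).
\<close>

definition weyl_super_module ::
  "nat \<Rightarrow> nat \<Rightarrow> bool \<Rightarrow> (complex \<Rightarrow> 'p::ab_group_add \<Rightarrow> 'p) \<Rightarrow> ('p \<Rightarrow> 'p) \<Rightarrow>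
   (nat \<Rightarrow> 'p \<Rightarrow> 'p) \<Rightarrow> (nat \<Rightarrow> 'p \<Rightarrow> 'p) \<Rightarrow> (nat \<Rightarrow> 'p \<Rightarrow> 'p) \<Rightarrow>
   (nat \<Rightarrow> 'p \<Rightarrow> 'p) \<Rightarrow> (nat \<Rightarrow> 'p \<Rightarrow> 'p) \<Rightarrow> bool" where
  "weyl_super_module m n laurent sc gam T Ti Dt X Dx \<longleftrightarrow>
     vector_space sc \<and>
     Vector_Spaces.linear sc sc gam \<and> (\<forall>u. gam (gam u) = u) \<and>
     (\<forall>i\<in>{1..m}. Vector_Spaces.linear sc sc (T i) \<and> Vector_Spaces.linear sc sc (Dt i)) \<and>
     (\<forall>j\<in>{1..n}. Vector_Spaces.linear sc sc (X j) \<and> Vector_Spaces.linear sc sc (Dx j)) \<and>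
     (\<forall>i\<in>{1..m}. \<forall>u. gam (T i u) = T i (gam u) \<and> gam (Dt i u) = Dt i (gam u)) \<and>
     (\<forall>j\<in>{1..n}. \<forall>u. gam (X j u) = - X j (gam u) \<and> gam (Dx j u) = - Dx j (gam u)) \<and>
     (\<forall>i\<in>{1..m}. \<forall>k\<in>{1..m}. \<forall>u.
        T i (T k u) = T k (T i u) \<and> Dt i (Dt k u) = Dt k (Dt i u) \<and>
        Dt i (T k u) = T k (Dt i u) + (if i = k then u else 0)) \<and>
     (\<forall>j\<in>{1..n}. \<forall>l\<in>{1..n}. \<forall>u.
        X j (X l u) = - X l (X j u) \<and> Dx j (Dx l u) = - Dx l (Dx j u) \<and>
        Dx j (X l u) = - X l (Dx j u) + (if j = l then u else 0)) \<and>
     (\<forall>i\<in>{1..m}. \<forall>j\<in>{1..n}. \<forall>u.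
        T i (X j u) = X j (T i u) \<and> T i (Dx j u) = Dx j (T i u) \<and>
        Dt i (X j u) = X j (Dt i u) \<and> Dt i (Dx j u) = Dx j (Dt i u)) \<and>
     (laurent \<longrightarrow> (\<forall>i\<in>{1..m}. Vector_Spaces.linear sc sc (Ti i) \<and>
        (\<forall>u. Ti i (T i u) = u \<and> T i (Ti i u) = u)))"

definition simple_weyl_super_module ::
  "nat \<Rightarrow> nat \<Rightarrow> bool \<Rightarrow> (complex \<Rightarrow> 'p::ab_group_add \<Rightarrow> 'p) \<Rightarrow> ('p \<Rightarrow> 'p) \<Rightarrow>
   (nat \<Rightarrow> 'p \<Rightarrow> 'p) \<Rightarrow> (nat \<Rightarrow> 'p \<Rightarrow> 'p) \<Rightarrow> (nat \<Rightarrow> 'p \<Rightarrow> 'p) \<Rightarrow>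
   (nat \<Rightarrow> 'p \<Rightarrow> 'p) \<Rightarrow> (nat \<Rightarrow> 'p \<Rightarrow> 'p) \<Rightarrow> bool" where
  "simple_weyl_super_module m n laurent sc gam T Ti Dt X Dx \<longleftrightarrow>
     weyl_super_module m n laurent sc gam T Ti Dt X Dx \<and>
     (\<exists>u::'p. u \<noteq> 0) \<and>
     (\<forall>U. module.subspace sc U \<and> gam ` U \<subseteq> U \<and>
          (\<forall>i\<in>{1..m}. T i ` U \<subseteq> U \<and> Dt i ` U \<subseteq> U \<and> (laurent \<longrightarrow> Ti i ` U \<subseteq> U)) \<and>
          (\<forall>j\<in>{1..n}. X j ` U \<subseteq> U \<and> Dx j ` U \<subseteq> U)
        \<longrightarrow> U = {0} \<or> U = UNIV)"

definition Xset :: "complex \<Rightarrow> complex set" where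
  "Xset c = (if c \<in> \<nat> then \<nat>
             else if c \<in> \<int> then {z. \<exists>k::nat. k \<ge> 1 \<and> z = - of_nat k}
             else {z. z - c \<in> \<int>})"

definition S_set :: "nat \<Rightarrow> (nat \<Rightarrow> complex) \<Rightarrow> (nat \<Rightarrow> complex) set" where
  "S_set n lam = {mu. (\<forall>j\<in>{1..n}. mu j \<in> Xset (lam j)) \<and> (\<forall>j. j \<notin> {1..n} \<longrightarrow> mu j = 0)}"

definition absv :: "nat \<Rightarrow> (nat \<Rightarrow> complex) \<Rightarrow> complex" where
  "absv n mu = (\<Sum>j=1..n. mu j)"

definition unitv :: "nat \<Rightarrow> nat \<Rightarrow> complex" where
  "unitv l = (\<lambda>j. if j = l then 1 else 0)"

text \<open>Basis of M(lambda): e_I y(mu) with I \<subseteq> {1..m} (wedge of e_i, i \<in> I, in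
  increasing order) and mu \<in> S(lambda).  P \<otimes> M(lambda) is represented by finitely
  supported functions from basis indices to P: f corresponds to the sum of f b \<otimes> b.\<close>
type_synonym bidx = "nat set \<times> (nat \<Rightarrow> complex)"

definition Bset :: "nat \<Rightarrow> nat \<Rightarrow> (nat \<Rightarrow> complex) \<Rightarrow> bidx set" where
  "Bset m n lam = {(I, mu). I \<subseteq> {1..m} \<and> mu \<in> S_set n lam}"

definition supp :: "(bidx \<Rightarrow> 'p::zero) \<Rightarrow> bidx set" where
  "supp f = {b. f b \<noteq> 0}"

definition Fspace :: "nat \<Rightarrow> nat \<Rightarrow> (nat \<Rightarrow> complex) \<Rightarrow> (bidx \<Rightarrow> 'p::zero) set" where
  "Fspace m n lam = {f. finite (supp f) \<and> supp f \<subseteq> Bset m n lam}"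

text \<open>Basis indices spanning L(V(m) \<otimes> N(lambda)) (r = m) resp. L(V(r) \<otimes> N(0)) (r < m).\<close>
definition Lidx :: "nat \<Rightarrow> nat \<Rightarrow> nat \<Rightarrow> (nat \<Rightarrow> complex) \<Rightarrow> bidx set" where
  "Lidx m n r lam =
     (if r = m then {(I, mu). I \<subseteq> {1..m} \<and> mu \<in> S_set n lam \<and>
                       of_nat m + absv n lam = of_nat (card I) + absv n mu}
      else {(I, alpha). I \<subseteq> {1..m} \<and> card I \<le> r \<and> alpha \<in> S_set n (\<lambda>_. 0) \<and>
                       of_nat r = of_nat (card I) + absv n alpha})"

definition FLspace :: "nat \<Rightarrow> nat \<Rightarrow> nat \<Rightarrow> (nat \<Rightarrow> complex) \<Rightarrow> (bidx \<Rightarrow> 'p::zero) set" where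
  "FLspace m n r lam = {f. finite (supp f) \<and> supp f \<subseteq> Lidx m n r lam}"

definition tens :: "'p::zero \<Rightarrow> bidx \<Rightarrow> (bidx \<Rightarrow> 'p)" where
  "tens u b = (\<lambda>c. if c = b then u else 0)"

text \<open>Sign with e_s \<wedge> e_I = wsign s I * e_{I \<union> {s}} for s \<notin> I.\<close>
definition wsign :: "nat \<Rightarrow> nat set \<Rightarrow> complex" where
  "wsign s I = (-1) ^ card {k\<in>I. k < s}"

text \<open>sigma_lambda(u \<otimes> e_I y(mu)) for u homogeneous of parity d (d \<in> {0,1});
  (-1)^(|u|-1) = (-1)^(d+1).  e_s \<wedge> e_I = 0 if s \<in> I;
  tau_l(e_I y(mu)) = (-1)^|I| e_I y(mu + e_l), which is 0 if mu + e_l \<notin> S(lambda).\<close>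
definition sigma_hom ::
  "nat \<Rightarrow> nat \<Rightarrow> (nat \<Rightarrow> complex) \<Rightarrow> (complex \<Rightarrow> 'p::ab_group_add \<Rightarrow> 'p) \<Rightarrow>
   (nat \<Rightarrow> 'p \<Rightarrow> 'p) \<Rightarrow> (nat \<Rightarrow> 'p \<Rightarrow> 'p) \<Rightarrow> 'p \<Rightarrow> nat \<Rightarrow> bidx \<Rightarrow> (bidx \<Rightarrow> 'p)" where
  "sigma_hom m n lam sc Dt Dx u d b =
     (case b of (I, mu) \<Rightarrow>
       (\<Sum>s\<in>{1..m}. if s \<in> I then 0 else tens (sc (wsign s I) (Dt s u)) (insert s I, mu))
       + (\<Sum>l\<in>{1..n}. if mu + unitv l \<in> S_set n lam
            then tens (sc ((-1) ^ (d + 1) * (-1) ^ card I) (Dx l u)) (I, mu + unitv l)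
            else 0))"

text \<open>sigma_lambda on F(P,M(lambda)), extended additively after splitting each
  P-component into its even part (u + gam u)/2 and odd part (u - gam u)/2.\<close>
definition sigma ::
  "nat \<Rightarrow> nat \<Rightarrow> (nat \<Rightarrow> complex) \<Rightarrow> (complex \<Rightarrow> 'p::ab_group_add \<Rightarrow> 'p) \<Rightarrow> ('p \<Rightarrow> 'p) \<Rightarrow>
   (nat \<Rightarrow> 'p \<Rightarrow> 'p) \<Rightarrow> (nat \<Rightarrow> 'p \<Rightarrow> 'p) \<Rightarrow> (bidx \<Rightarrow> 'p) \<Rightarrow> (bidx \<Rightarrow> 'p)" where
  "sigma m n lam sc gam Dt Dx f =
     (\<Sum>b\<in>supp f. sigma_hom m n lam sc Dt Dx (sc (1/2) (f b + gam (f b))) 0 b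
                 + sigma_hom m n lam sc Dt Dx (sc (1/2) (f b - gam (f b))) 1 b)"

end

theory Submission
  imports Defs
begin

lemma sum_fun_apply': "(\<Sum>a\<in>A. g a) x = (\<Sum>a\<in>A. g a x)"
  by (induct A rule: infinite_finite_induct) auto

lemma tens_add: "tens (x + y::'a::monoid_add) c = tens x c + tens y c"
  by (auto simp: tens_def fun_eq_iff)
lemma tens_zero[simp]: "tens 0 c = 0"
  by (auto simp: tens_def fun_eq_iff)
lemma tens_neg: "tens (- x::'a::group_add) c = - tens x c"
  by (auto simp: tens_def fun_eq_iff)
lemma tens_apply: "tens x c d = (if d = c then x else 0)"
  by (simp add: tens_def)

lemma supp_tens: "supp (tens u c) \<subseteq> {c}"
  by (auto simp: supp_def tens_def)
lemma fin_tens[simp]: "finite (supp (tens u c))"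
  using supp_tens finite_subset by blast
lemma supp_add: "supp (f + g::bidx \<Rightarrow> 'a::monoid_add) \<subseteq> supp f \<union> supp g"
  by (auto simp: supp_def)
lemma fin_add[simp]: "finite (supp f) \<Longrightarrow> finite (supp g) \<Longrightarrow> finite (supp (f + g::bidx \<Rightarrow> 'a::monoid_add))"
  using supp_add finite_subset by (metis finite_Un)
lemma fin_zero[simp]: "finite (supp (0::bidx \<Rightarrow> 'p::zero))"
  by (simp add: supp_def)
lemma fin_sum: "(\<And>a. a \<in> A \<Longrightarrow> finite (supp (g a))) \<Longrightarrow> finite (supp (\<Sum>a\<in>A. g a::bidx \<Rightarrow> 'a::comm_monoid_add))"
  by (induct A rule: infinite_finite_induct) auto
lemma fin_if1: "finite (supp f) \<Longrightarrow> finite (supp (if P then 0 else f::bidx \<Rightarrow> 'a::zero))"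
  by auto
lemma fin_if2: "finite (supp f) \<Longrightarrow> finite (supp (if P then f else 0::bidx \<Rightarrow> 'a::zero))"
  by auto

lemma Ints_not_Nats: assumes "(c::complex) \<in> \<int>" "c \<notin> \<nat>" shows "\<exists>k::nat. k \<ge> 1 \<and> c = - of_nat k"
proof -
  obtain k :: int where k: "c = of_int k" using assms(1) Ints_cases by blast
  have "k < 0"
  proof (rule ccontr)
    assume "\<not> k < 0"
    then have "c = of_nat (nat k)" using k by simp
    then show False using assms(2) by simp
  qed
  then show ?thesis using k by (intro exI[of _ "nat (-k)"]) auto
qed

lemma Xset_self: "c \<in> Xset c"
proof (cases "c \<in> \<nat>")
  case False
  show ?thesis
  proof (cases "c \<in> \<int>")
    case True
    then show ?thesis using False Ints_not_Nats[OF True False] by (simp add: Xset_def)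
  qed (use False in \<open>simp add: Xset_def\<close>)
qed (simp add: Xset_def)

lemma Xset_succ: assumes "c \<noteq> -1" shows "c + 1 \<in> Xset c"
proof (cases "c \<in> \<nat>")
  case False
  show ?thesis
  proof (cases "c \<in> \<int>")
    case True
    obtain k :: nat where k: "k \<ge> 1" "c = - of_nat k" using Ints_not_Nats[OF True False] by blast
    then have "k \<noteq> 1" using assms by auto
    then have "c + 1 = - of_nat (k - 1)" "k - 1 \<ge> 1" using k by (auto simp: of_nat_diff)
    then show ?thesis using True False by (auto simp: Xset_def)
  next
    case False2: False
    have "(c + 1) - c \<in> \<int>" by simp
    then show ?thesis using False False2 by (simp add: Xset_def)
  qed
qed (simp add: Xset_def)

lemma m1_notNats: "(-1::complex) \<notin> \<nat>"
proof
  assume "(-1::complex) \<in> \<nat>"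
  then obtain k :: nat where "(-1::complex) = of_nat k" by (auto elim: Nats_cases)
  then have "Re (-1::complex) = Re (of_nat k)" by simp
  then show False by simp
qed

lemma Xset_m1: "Xset (-1) = {z. \<exists>k::nat. k \<ge> 1 \<and> z = - of_nat k}"
  using m1_notNats by (simp add: Xset_def)

lemma Lidx_m1: assumes lam: "\<forall>j\<in>{1..n}. lam j = -1" and b: "(I, mu) \<in> Lidx m n m lam"
  shows "I = {1..m} \<and> (\<forall>l\<in>{1..n}. mu + unitv l \<notin> S_set n lam)"
proof -
  have I: "I \<subseteq> {1..m}" and mu: "mu \<in> S_set n lam"
    and eq: "of_nat m + absv n lam = of_nat (card I) + absv n mu"
    using b by (auto simp: Lidx_def)
  have mus: "\<exists>k::nat. k \<ge> 1 \<and> mu j = - of_nat k" if "j \<in> {1..n}" for j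
    using mu that lam Xset_m1 by (auto simp: S_set_def)
  have Rle: "Re (mu j) \<le> -1" if "j \<in> {1..n}" for j
    using mus[OF that] by auto
  have al: "absv n lam = - of_nat n" using lam by (simp add: absv_def)
  have Req: "real m - real n = real (card I) + (\<Sum>j\<in>{1..n}. Re (mu j))"
  proof -
    have "of_nat m - of_nat n = of_nat (card I) + absv n mu" using eq al by simp
    from arg_cong[OF this, of Re] show ?thesis by (simp add: absv_def)
  qed
  have sle: "(\<Sum>j\<in>{1..n}. Re (mu j)) \<le> (\<Sum>j\<in>{1..n}. -1)" by (rule sum_mono) (use Rle in auto)
  have cle: "card I \<le> m" using card_mono[OF _ I] by simp
  have cI: "card I = m" and ssum: "(\<Sum>j\<in>{1..n}. Re (mu j)) = - real n"
    using Req sle cle by auto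
  have Ieq: "I = {1..m}" using card_subset_eq[OF _ I] cI by simp
  have "(\<Sum>j\<in>{1..n}. - (Re (mu j) + 1)) = - ((\<Sum>j\<in>{1..n}. Re (mu j)) + (\<Sum>j\<in>{1..n}. 1))"
    by (simp only: sum_negf sum.distrib)
  then have "(\<Sum>j\<in>{1..n}. - (Re (mu j) + 1)) = 0" using ssum by simp
  then have "\<forall>j\<in>{1..n}. - (Re (mu j) + 1) = 0"
    by (subst sum_nonneg_eq_0_iff[symmetric]) (use Rle in auto)
  then have m1: "mu j = -1" if "j \<in> {1..n}" for j
    using mus[OF that] that by fastforce
  have "mu + unitv l \<notin> S_set n lam" if l: "l \<in> {1..n}" for l
  proof
    assume "mu + unitv l \<in> S_set n lam"
    then have "(mu + unitv l) l \<in> Xset (lam l)" using l by (auto simp: S_set_def)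
    then have "(0::complex) \<in> Xset (-1)" using m1[OF l] lam l by (simp add: unitv_def)
    then show False unfolding Xset_m1 by auto
  qed
  then show ?thesis using Ieq by blast
qed

locale W = vector_space sc for sc :: "complex \<Rightarrow> 'p::ab_group_add \<Rightarrow> 'p" +
  fixes m n :: nat and gam :: "'p \<Rightarrow> 'p" and Dt Dx :: "nat \<Rightarrow> 'p \<Rightarrow> 'p" and lam :: "nat \<Rightarrow> complex"
  assumes gadd: "gam (x + y) = gam x + gam y"
    and gsc: "gam (sc c x) = sc c (gam x)"
    and gg: "gam (gam x) = x"
    and Dtadd: "s \<in> {1..m} \<Longrightarrow> Dt s (x + y) = Dt s x + Dt s y"
    and Dtsc: "s \<in> {1..m} \<Longrightarrow> Dt s (sc c x) = sc c (Dt s x)"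
    and Dxadd: "l \<in> {1..n} \<Longrightarrow> Dx l (x + y) = Dx l x + Dx l y"
    and Dxsc: "l \<in> {1..n} \<Longrightarrow> Dx l (sc c x) = sc c (Dx l x)"
    and gDt: "s \<in> {1..m} \<Longrightarrow> gam (Dt s x) = Dt s (gam x)"
    and gDx: "l \<in> {1..n} \<Longrightarrow> gam (Dx l x) = - Dx l (gam x)"
    and DtDt: "s \<in> {1..m} \<Longrightarrow> s' \<in> {1..m} \<Longrightarrow> Dt s (Dt s' x) = Dt s' (Dt s x)"
    and DxDx: "l \<in> {1..n} \<Longrightarrow> l' \<in> {1..n} \<Longrightarrow> Dx l (Dx l' x) = - Dx l' (Dx l x)"
    and DtDx: "s \<in> {1..m} \<Longrightarrow> l \<in> {1..n} \<Longrightarrow> Dt s (Dx l x) = Dx l (Dt s x)"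
begin

abbreviation "S \<equiv> S_set n lam"
abbreviation "sh \<equiv> sigma_hom m n lam sc Dt Dx"
abbreviation "sg \<equiv> sigma m n lam sc gam Dt Dx"
definition "ev x = sc (1/2) (x + gam x)"
definition "od x = sc (1/2) (x - gam x)"
definition "H f b = sh (ev (f b)) 0 b + sh (od (f b)) 1 b"

lemma half_half: "sc (1/2) (x + x) = x"
proof -
  have "sc (1/2) (x + x) = sc (1/2) x + sc (1/2) x" by (rule scale_right_distrib)
  also have "\<dots> = sc (1/2 + 1/2) x" by (rule scale_left_distrib[symmetric])
  finally show ?thesis by simp
qed

lemma self_neg: assumes "x = - x" shows "x = (0::'p)"
proof -
  have "x + x = 0" using assms by (metis add.right_inverse)
  then show ?thesis using half_half[of x] by simp
qed

lemma fun_self_neg: "(f::bidx \<Rightarrow> 'p) = - f \<Longrightarrow> f = 0"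
  by (auto simp: fun_eq_iff intro: self_neg)

lemma g0[simp]: "gam 0 = 0"
  by (metis add_cancel_right_right gadd)
lemma gneg: "gam (- x) = - gam x"
  by (metis add.right_inverse add_eq_0_iff g0 gadd)
lemma gdiff: "gam (x - y) = gam x - gam y"
  by (metis diff_conv_add_uminus gadd gneg)
lemma Dt0: "s \<in> {1..m} \<Longrightarrow> Dt s 0 = 0"
  by (metis add_cancel_right_right Dtadd)
lemma Dx0: "l \<in> {1..n} \<Longrightarrow> Dx l 0 = 0"
  by (metis add_cancel_right_right Dxadd)
lemma Dtneg: "s \<in> {1..m} \<Longrightarrow> Dt s (- x) = - Dt s x"
  by (metis add.right_inverse add_eq_0_iff Dt0 Dtadd)
lemma Dxneg: "l \<in> {1..n} \<Longrightarrow> Dx l (- x) = - Dx l x"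
  by (metis add.right_inverse add_eq_0_iff Dx0 Dxadd)

lemma ev_add: "ev (x + y) = ev x + ev y"
  by (simp add: ev_def gadd algebra_simps)
lemma od_add: "od (x + y) = od x + od y"
  by (simp add: od_def gadd gneg algebra_simps)
lemma ev0[simp]: "ev 0 = 0" by (simp add: ev_def)
lemma od0[simp]: "od 0 = 0" by (simp add: od_def)

lemma sh_add: "sh (u + v) d b = sh u d b + sh v d b"
proof -
  obtain I mu where b: "b = (I, mu)" by force
  have 1: "(\<Sum>s\<in>{1..m}. if s \<in> I then 0 else tens (sc (wsign s I) (Dt s (u + v))) (insert s I, mu))
    = (\<Sum>s\<in>{1..m}. (if s \<in> I then 0 else tens (sc (wsign s I) (Dt s u)) (insert s I, mu))
         + (if s \<in> I then 0 else tens (sc (wsign s I) (Dt s v)) (insert s I, mu)))"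
    by (rule sum.cong) (auto simp: Dtadd scale_right_distrib tens_add)
  have 2: "(\<Sum>l\<in>{1..n}. if mu + unitv l \<in> S then tens (sc c (Dx l (u + v))) (I, mu + unitv l) else 0)
    = (\<Sum>l\<in>{1..n}. (if mu + unitv l \<in> S then tens (sc c (Dx l u)) (I, mu + unitv l) else 0)
        + (if mu + unitv l \<in> S then tens (sc c (Dx l v)) (I, mu + unitv l) else 0))" for c
    by (rule sum.cong) (auto simp: Dxadd scale_right_distrib tens_add)
  show ?thesis unfolding b sigma_hom_def using 1 2 by (simp add: sum.distrib algebra_simps)
qed

lemma sh_zero[simp]: "sh 0 d b = 0"
  using sh_add[of 0 0 d b] by simp

lemma fin_sh[simp]: "finite (supp (sh u d b))"
  unfolding sigma_hom_def by (auto split: prod.splits intro!: fin_add fin_sum fin_if1 fin_if2)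

lemma sg_eq: assumes "finite B" "supp f \<subseteq> B" shows "sg f = (\<Sum>b\<in>B. H f b)"
proof -
  have "sg f = (\<Sum>b\<in>supp f. H f b)" by (simp add: sigma_def H_def ev_def od_def)
  also have "\<dots> = (\<Sum>b\<in>B. H f b)"
    by (rule sum.mono_neutral_left) (use assms in \<open>auto simp: supp_def H_def\<close>)
  finally show ?thesis .
qed

lemma sg_add: assumes "finite (supp f)" "finite (supp g)" shows "sg (f + g) = sg f + sg g"
proof -
  let ?B = "supp f \<union> supp g"
  have "sg (f + g) = (\<Sum>b\<in>?B. H (f + g) b)" using assms supp_add by (intro sg_eq) auto
  also have "\<dots> = (\<Sum>b\<in>?B. H f b + H g b)"
    by (rule sum.cong) (auto simp: H_def ev_add od_add sh_add)
  also have "\<dots> = sg f + sg g"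
  proof -
    have "sg f = (\<Sum>b\<in>?B. H f b)" by (rule sg_eq) (use assms in auto)
    moreover have "sg g = (\<Sum>b\<in>?B. H g b)" by (rule sg_eq) (use assms in auto)
    ultimately show ?thesis by (simp add: sum.distrib)
  qed
  finally show ?thesis .
qed

lemma sg_zero[simp]: "sg 0 = 0"
  by (simp add: sigma_def supp_def)

lemma sg_sum: "(\<And>a. a \<in> A \<Longrightarrow> finite (supp (g a))) \<Longrightarrow> sg (\<Sum>a\<in>A. g a) = (\<Sum>a\<in>A. sg (g a))"
  by (induct A rule: infinite_finite_induct) (auto simp: sg_add fin_sum)

lemma sg_if: "sg (if P then 0 else x) = (if P then 0 else sg x)"
  "sg (if P then x else 0) = (if P then sg x else 0)" by auto

lemma sg_tens: assumes "d \<le> 1" "gam v = sc ((-1)^d) v" shows "sg (tens v c) = sh v d c"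
proof (cases "v = 0")
  case True then show ?thesis by simp
next
  case False
  have "sg (tens v c) = (\<Sum>b\<in>{c}. H (tens v c) b)" by (rule sg_eq) (auto simp: supp_tens)
  then have "sg (tens v c) = H (tens v c) c" by simp
  moreover have "d = 0 \<or> d = 1" using assms by auto
  ultimately show ?thesis using assms
    by (auto simp: H_def ev_def od_def tens_def half_half)
qed

lemma card_ins: "I \<subseteq> {1..m} \<Longrightarrow> s \<notin> I \<Longrightarrow> card (insert s I) = Suc (card I)"
  using finite_subset by (metis card_insert_disjoint finite_atLeastAtMost)

lemma wsign_ins: assumes "I \<subseteq> {1..m}" "s \<notin> I" "s \<noteq> s'"
  shows "wsign s' (insert s I) = (if s < s' then -1 else 1) * wsign s' I"
proof -
  have fin: "finite {k\<in>I. k < s'}" using assms(1) finite_subset by (metis finite_Collect_conjI finite_lessThan lessThan_iff mem_Collect_eq subsetI)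
  show ?thesis
  proof (cases "s < s'")
    case True
    then have "{k\<in>insert s I. k < s'} = insert s {k\<in>I. k < s'}" by auto
    then show ?thesis using True assms fin by (simp add: wsign_def)
  next
    case False
    then have "{k\<in>insert s I. k < s'} = {k\<in>I. k < s'}" by auto
    then show ?thesis using False by (simp add: wsign_def)
  qed
qed

lemma wsign_anti: assumes "I \<subseteq> {1..m}" "s \<notin> I" "s' \<notin> I" "s \<noteq> s'"
  shows "wsign s' (insert s I) * wsign s I = - (wsign s (insert s' I) * wsign s' I)"
  using assms by (auto simp: wsign_ins)

lemma S_step: assumes "mu \<in> S_set n lam" "l \<in> {1..n}" "l' \<in> {1..n}" "l \<noteq> l'"
  "mu + unitv l + unitv l' \<in> S_set n lam" shows "mu + unitv l \<in> S_set n lam"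
proof -
  have e: "(mu + unitv l) j = (if j = l then (mu + unitv l + unitv l') j else mu j)" for j
    using assms(4) by (auto simp: unitv_def)
  have A: "\<forall>j\<in>{1..n}. mu j \<in> Xset (lam j)" "\<forall>j. j \<notin> {1..n} \<longrightarrow> mu j = 0"
    "\<forall>j\<in>{1..n}. (mu + unitv l + unitv l') j \<in> Xset (lam j)"
    using assms(1,5) unfolding S_set_def by auto
  show ?thesis unfolding S_set_def mem_Collect_eq
  proof (intro conjI ballI allI impI)
    fix j assume j: "j \<in> {1..n}"
    show "(mu + unitv l) j \<in> Xset (lam j)"
    proof (cases "j = l")
      case True
      then show ?thesis using A(3) j e[of j] by (simp del: plus_fun_apply)
    qed (use A(1) j e[of j] in simp)
  next
    fix j assume j: "j \<notin> {1..n}"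
    then have "j \<noteq> l" using assms(2) by auto
    then show "(mu + unitv l) j = 0" using A(2) j e[of j] by simp
  qed
qed

lemma tens_sc_neg: "A = - B \<Longrightarrow> tens (sc A x) c = - tens (sc B x) c"
  by (simp add: tens_neg)

lemma swap_zero:
  assumes "\<And>a b. a \<in> A \<Longrightarrow> b \<in> A \<Longrightarrow> g a b = - g b a"
  shows "(\<Sum>a\<in>A. \<Sum>b\<in>A. g a b) = (0::bidx \<Rightarrow> 'p)"
proof -
  let ?X = "(\<Sum>a\<in>A. \<Sum>b\<in>A. g a b)"
  have "?X = (\<Sum>b\<in>A. \<Sum>a\<in>A. g a b)" by (rule sum.swap)
  also have "\<dots> = (\<Sum>b\<in>A. \<Sum>a\<in>A. - g b a)"
    by (intro sum.cong refl, rule assms) auto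
  also have "\<dots> = - ?X" by (simp add: sum_negf)
  finally show ?thesis by (rule fun_self_neg)
qed

lemma core:
  assumes I: "I \<subseteq> {1..m}" and mu: "mu \<in> S" and d: "d \<le> 1" and par: "gam u = sc ((-1)^d) u"
  shows "sg (sh u d (I, mu)) = 0"
proof -
  define c0 :: complex where "c0 = (-1)^(d+1) * (-1)^card I"
  define g1 where "g1 s s' = (if s \<in> I then 0 else (if s' \<in> insert s I then 0 else
      tens (sc (wsign s' (insert s I)) (Dt s' (sc (wsign s I) (Dt s u)))) (insert s' (insert s I), mu)))" for s s'
  define g3a where "g3a s l = (if s \<in> I then 0 else (if mu + unitv l \<in> S then
      tens (sc ((-1)^(d+1) * (-1)^card (insert s I)) (Dx l (sc (wsign s I) (Dt s u)))) (insert s I, mu + unitv l) else 0))" for s l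
  define g3b where "g3b l s = (if mu + unitv l \<in> S then (if s \<in> I then 0 else
      tens (sc (wsign s I) (Dt s (sc c0 (Dx l u)))) (insert s I, mu + unitv l)) else 0)" for l s
  define c1 :: complex where "c1 = (-1)^((1-d)+1) * (-1)^card I"
  define g2 where "g2 l l' = (if mu + unitv l \<in> S then (if mu + unitv l + unitv l' \<in> S then
      tens (sc c1 (Dx l' (sc c0 (Dx l u)))) (I, mu + unitv l + unitv l') else 0) else 0)" for l l'
  have d01: "d = 0 \<or> d = 1" using d by auto
  have sh_eq: "sh u d (I, mu) = (\<Sum>s\<in>{1..m}. if s \<in> I then 0 else tens (sc (wsign s I) (Dt s u)) (insert s I, mu))
      + (\<Sum>l\<in>{1..n}. if mu + unitv l \<in> S then tens (sc c0 (Dx l u)) (I, mu + unitv l) else 0)"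
    unfolding c0_def sigma_hom_def by simp
  have parDt: "gam (sc w (Dt s u)) = sc ((-1)^d) (sc w (Dt s u))" if "s \<in> {1..m}" for s w
    using that by (simp add: gsc gDt par Dtsc mult.commute)
  have parDx: "gam (sc w (Dx l u)) = sc ((-1)^(1-d)) (sc w (Dx l u))" if "l \<in> {1..n}" for l w
    using that d01 by (auto simp: gsc gDx par Dxsc)
  have step1: "sg (sh u d (I, mu)) =
      (\<Sum>s\<in>{1..m}. if s \<in> I then 0 else sh (sc (wsign s I) (Dt s u)) d (insert s I, mu))
    + (\<Sum>l\<in>{1..n}. if mu + unitv l \<in> S then sh (sc c0 (Dx l u)) (1-d) (I, mu + unitv l) else 0)"
    unfolding sh_eq
    apply (subst sg_add)
      apply (rule fin_sum, simp)
     apply (rule fin_sum, simp)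
    apply (subst sg_sum, simp)
    apply (subst sg_sum, simp)
    apply (intro arg_cong2[where f="(+)"] sum.cong refl)
     apply (simp add: sg_tens[OF d parDt])
    apply (simp add: sg_tens[OF _ parDx])
    done
  have stepA: "(if s \<in> I then 0 else sh (sc (wsign s I) (Dt s u)) d (insert s I, mu))
      = (\<Sum>s'\<in>{1..m}. g1 s s') + (\<Sum>l\<in>{1..n}. g3a s l)" for s
    by (cases "s \<in> I") (simp_all add: g1_def g3a_def sigma_hom_def)
  have stepB: "(if mu + unitv l \<in> S then sh (sc c0 (Dx l u)) (1-d) (I, mu + unitv l) else 0)
      = (\<Sum>s\<in>{1..m}. g3b l s) + (\<Sum>l'\<in>{1..n}. g2 l l')" for l
    unfolding g3b_def g2_def sigma_hom_def c1_def by (cases "mu + unitv l \<in> S") simp_all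
  have step2: "sg (sh u d (I, mu)) = (\<Sum>s\<in>{1..m}. \<Sum>s'\<in>{1..m}. g1 s s')
     + ((\<Sum>s\<in>{1..m}. \<Sum>l\<in>{1..n}. g3a s l) + (\<Sum>l\<in>{1..n}. \<Sum>s\<in>{1..m}. g3b l s))
     + (\<Sum>l\<in>{1..n}. \<Sum>l'\<in>{1..n}. g2 l l')"
    unfolding step1 stepA stepB by (simp add: sum.distrib algebra_simps)
  have z1: "(\<Sum>s\<in>{1..m}. \<Sum>s'\<in>{1..m}. g1 s s') = 0"
  proof (rule swap_zero)
    fix s s' assume s: "s \<in> {1..m}" and s': "s' \<in> {1..m}"
    show "g1 s s' = - g1 s' s"
    proof (cases "s \<in> I \<or> s' \<in> I \<or> s = s'")
      case True then show ?thesis by (auto simp: g1_def)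
    next
      case False
      then have A: "g1 s s' = tens (sc (wsign s' (insert s I) * wsign s I) (Dt s' (Dt s u))) (insert s' (insert s I), mu)"
        using s s' by (simp add: g1_def Dtsc)
      have "g1 s' s = tens (sc (wsign s (insert s' I)) (Dt s (sc (wsign s' I) (Dt s' u)))) (insert s (insert s' I), mu)"
        using False by (simp add: g1_def)
      then have B: "g1 s' s = tens (sc (wsign s (insert s' I) * wsign s' I) (Dt s' (Dt s u))) (insert s' (insert s I), mu)"
        using s s' by (simp only: Dtsc[OF s] DtDt[OF s s'] insert_commute[of s s' I] scale_scale)
      have "wsign s' (insert s I) * wsign s I = - (wsign s (insert s' I) * wsign s' I)"
        using False I by (intro wsign_anti) auto
      then show ?thesis by (simp only: A B tens_sc_neg)
    qed
  qed
  have z2: "(\<Sum>l\<in>{1..n}. \<Sum>l'\<in>{1..n}. g2 l l') = 0"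
  proof (rule swap_zero)
    fix l l' assume l: "l \<in> {1..n}" and l': "l' \<in> {1..n}"
    show "g2 l l' = - g2 l' l"
    proof (cases "l = l'")
      case True
      have "Dx l (Dx l u) = 0" using DxDx[OF l l] self_neg by blast
      then have "g2 l l = 0" using l by (simp add: g2_def Dxsc)
      then show ?thesis using True by simp
    next
      case False
      have comm: "mu + unitv l' + unitv l = mu + unitv l + unitv l'" by (simp add: add.assoc add.commute)
      have c1: "(mu + unitv l \<in> S \<and> mu + unitv l + unitv l' \<in> S) = (mu + unitv l + unitv l' \<in> S)"
        using S_step[OF mu l l' False] by blast
      have c2: "(mu + unitv l' \<in> S \<and> mu + unitv l + unitv l' \<in> S) = (mu + unitv l + unitv l' \<in> S)"
        using S_step[OF mu l' l] False comm by (metis)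
      have "g2 l l' = (if mu + unitv l + unitv l' \<in> S then tens (sc (c1 * c0) (Dx l' (Dx l u))) (I, mu + unitv l + unitv l') else 0)"
        using c1 l l' by (auto simp: g2_def Dxsc)
      moreover have "g2 l' l = (if mu + unitv l' \<in> S \<and> mu + unitv l + unitv l' \<in> S then tens (sc c1 (Dx l (sc c0 (Dx l' u)))) (I, mu + unitv l + unitv l') else 0)"
        unfolding g2_def comm by simp
      then have "g2 l' l = (if mu + unitv l + unitv l' \<in> S then tens (sc (c1 * c0) (- Dx l' (Dx l u))) (I, mu + unitv l + unitv l') else 0)"
        unfolding c2 using l l' by (simp add: Dxsc DxDx[OF l l'])
      ultimately show ?thesis by (simp add: tens_neg)
    qed
  qed
  have z3: "(\<Sum>s\<in>{1..m}. \<Sum>l\<in>{1..n}. g3a s l) + (\<Sum>l\<in>{1..n}. \<Sum>s\<in>{1..m}. g3b l s) = 0"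
  proof -
    have "(\<Sum>l\<in>{1..n}. \<Sum>s\<in>{1..m}. g3b l s) = (\<Sum>s\<in>{1..m}. \<Sum>l\<in>{1..n}. g3b l s)" by (rule sum.swap)
    moreover have "g3a s l + g3b l s = 0" if s: "s \<in> {1..m}" and l: "l \<in> {1..n}" for s l
    proof (cases "s \<in> I \<or> mu + unitv l \<notin> S")
      case True then show ?thesis by (auto simp: g3a_def g3b_def)
    next
      case False
      then have "g3a s l = tens (sc ((-1)^(d+1) * (-1)^Suc (card I) * wsign s I) (Dx l (Dt s u))) (insert s I, mu + unitv l)"
        using s l I by (simp add: g3a_def Dxsc card_ins)
      moreover have "g3b l s = tens (sc (wsign s I * c0) (Dx l (Dt s u))) (insert s I, mu + unitv l)"
        using False s l by (simp add: g3b_def Dtsc DtDx)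
      ultimately show ?thesis by (simp add: c0_def tens_neg mult_ac)
    qed
    ultimately show ?thesis by (simp add: sum.distrib[symmetric])
  qed
  show ?thesis unfolding step2 z1 z2 z3 by simp
qed

lemma ev_par: "gam (ev x) = sc ((-1)^0) (ev x)"
  by (simp add: ev_def gsc gadd gg add.commute)

lemma od_par: "gam (od x) = sc ((-1)^1) (od x)"
proof -
  have "gam (od x) = sc (1/2) (gam x - x)" by (simp add: od_def gsc gdiff gg)
  also have "\<dots> = - od x" unfolding od_def by (metis minus_diff_eq scale_minus_right)
  finally show ?thesis by simp
qed

lemma ev_od: "ev x + od x = x"
proof -
  have "ev x + od x = sc (1/2) ((x + gam x) + (x - gam x))" unfolding ev_def od_def by (rule scale_right_distrib[symmetric])
  also have "\<dots> = sc (1/2) (x + x)" by (rule arg_cong[where f="sc (1/2)"]) simp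
  finally show ?thesis by (simp add: half_half)
qed

lemma sq_zero: assumes "f \<in> Fspace m n lam" shows "sg (sg f) = 0"
proof -
  have fin: "finite (supp f)" and sub: "supp f \<subseteq> Bset m n lam" using assms by (auto simp: Fspace_def)
  have "sg f = (\<Sum>b\<in>supp f. H f b)" by (rule sg_eq) (use fin in auto)
  then have "sg (sg f) = (\<Sum>b\<in>supp f. sg (H f b))"
    by (simp add: sg_sum H_def)
  also have "\<dots> = (\<Sum>b\<in>supp f. 0)"
  proof (rule sum.cong[OF refl])
    fix b assume "b \<in> supp f"
    then obtain I mu where b: "b = (I, mu)" "I \<subseteq> {1..m}" "mu \<in> S" using sub by (auto simp: Bset_def)
    have "sg (sh (ev (f b)) 0 b) = 0" using core[of I mu 0 "ev (f b)"] b ev_par by simp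
    moreover have "sg (sh (od (f b)) 1 b) = 0" using core[of I mu 1 "od (f b)"] b od_par by simp
    ultimately show "sg (H f b) = 0" unfolding H_def by (simp add: sg_add)
  qed
  finally show ?thesis by simp
qed

lemma hom_Dt: assumes "s \<in> {1..m}" "Dt s v \<noteq> 0" shows "\<exists>u d. d \<le> 1 \<and> gam u = sc ((-1)^d) u \<and> Dt s u \<noteq> 0"
proof -
  have "Dt s v = Dt s (ev v) + Dt s (od v)" using ev_od[of v] Dtadd[OF assms(1)] by metis
  then have "Dt s (ev v) \<noteq> 0 \<or> Dt s (od v) \<noteq> 0" using assms(2) by auto
  then show ?thesis
  proof
    assume "Dt s (ev v) \<noteq> 0" then show ?thesis using ev_par[of v] by (intro exI[of _ "ev v"] exI[of _ 0]) auto
  next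
    assume "Dt s (od v) \<noteq> 0" then show ?thesis using od_par[of v] by (intro exI[of _ "od v"] exI[of _ 1]) auto
  qed
qed

lemma hom_Dx: assumes "l \<in> {1..n}" "Dx l v \<noteq> 0" shows "\<exists>u d. d \<le> 1 \<and> gam u = sc ((-1)^d) u \<and> Dx l u \<noteq> 0"
proof -
  have "Dx l v = Dx l (ev v) + Dx l (od v)" using ev_od[of v] Dxadd[OF assms(1)] by metis
  then have "Dx l (ev v) \<noteq> 0 \<or> Dx l (od v) \<noteq> 0" using assms(2) by auto
  then show ?thesis
  proof
    assume "Dx l (ev v) \<noteq> 0" then show ?thesis using ev_par[of v] by (intro exI[of _ "ev v"] exI[of _ 0]) auto
  next
    assume "Dx l (od v) \<noteq> 0" then show ?thesis using od_par[of v] by (intro exI[of _ "od v"] exI[of _ 1]) auto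
  qed
qed

lemma eval_s: assumes "I \<subseteq> {1..m}" "s \<in> {1..m}" "s \<notin> I"
  shows "sh u d (I, mu) (insert s I, mu) = sc (wsign s I) (Dt s u)"
proof -
  have 1: "(\<Sum>s'\<in>{1..m}. if s' \<in> I then 0 else tens (sc (wsign s' I) (Dt s' u)) (insert s' I, mu)) (insert s I, mu)
      = (\<Sum>s'\<in>{1..m}. if s' = s then sc (wsign s' I) (Dt s' u) else 0)"
    unfolding sum_fun_apply'
  proof (rule sum.cong[OF refl])
    fix s' assume "s' \<in> {1..m}"
    show "(if s' \<in> I then 0 else tens (sc (wsign s' I) (Dt s' u)) (insert s' I, mu)) (insert s I, mu)
       = (if s' = s then sc (wsign s' I) (Dt s' u) else 0)"
    proof (cases "s' \<in> I")
      case True then show ?thesis using assms by auto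
    next
      case False
      have "insert s I = insert s' I \<longleftrightarrow> s' = s" using False assms(3) by blast
      then show ?thesis using False by (auto simp: tens_apply)
    qed
  qed
  have 2: "(\<Sum>l\<in>{1..n}. if mu + unitv l \<in> S then tens (sc ((-1)^(d+1) * (-1)^card I) (Dx l u)) (I, mu + unitv l) else 0) (insert s I, mu) = 0"
    unfolding sum_fun_apply' using assms(3) by (intro sum.neutral) (auto simp: tens_apply)
  show ?thesis using assms(2) unfolding sigma_hom_def prod.case plus_fun_apply 1 2 by simp
qed

lemma eval_l: assumes "{1..m} \<subseteq> I" "l \<in> {1..n}" "mu + unitv l \<in> S"
  shows "sh u d (I, mu) (I, mu + unitv l) = sc ((-1)^(d+1) * (-1)^card I) (Dx l u)"
proof -
  have inj: "mu + unitv l' = mu + unitv l \<longleftrightarrow> l' = l" for l'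
  proof
    assume "mu + unitv l' = mu + unitv l"
    then have "unitv l' l = unitv l l" by (metis add_left_cancel plus_fun_apply)
    then show "l' = l" by (simp add: unitv_def split: if_splits)
  qed simp
  have 1: "(\<Sum>l'\<in>{1..n}. if mu + unitv l' \<in> S then tens (sc c (Dx l' u)) (I, mu + unitv l') else 0) (I, mu + unitv l)
      = (\<Sum>l'\<in>{1..n}. if l' = l then sc c (Dx l' u) else 0)" for c
    unfolding sum_fun_apply'
  proof (rule sum.cong[OF refl])
    fix l' assume "l' \<in> {1..n}"
    show "(if mu + unitv l' \<in> S then tens (sc c (Dx l' u)) (I, mu + unitv l') else 0) (I, mu + unitv l)
      = (if l' = l then sc c (Dx l' u) else 0)"
    proof (cases "l' = l")
      case True then show ?thesis using assms(3) by (simp add: tens_apply)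
    next
      case False
      then have "(I, mu + unitv l) \<noteq> (I, mu + unitv l')" using inj[of l'] by auto
      then show ?thesis using False by (simp add: tens_apply)
    qed
  qed
  have 2: "(\<Sum>s\<in>{1..m}. if s \<in> I then 0 else tens (sc (wsign s I) (Dt s u)) (insert s I, mu)) x = 0" for x
    unfolding sum_fun_apply' using assms(1) by (intro sum.neutral) auto
  show ?thesis using assms(2) unfolding sigma_hom_def prod.case plus_fun_apply 1 2 by simp
qed

lemma sh_vanish: assumes "{1..m} \<subseteq> I" "\<forall>l\<in>{1..n}. mu + unitv l \<notin> S" shows "sh u d (I, mu) = 0"
proof -
  have 1: "(\<Sum>s\<in>{1..m}. if s \<in> I then 0 else tens (sc (wsign s I) (Dt s u)) (insert s I, mu)) = 0"
    using assms(1) by (intro sum.neutral) auto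
  have 2: "(\<Sum>l\<in>{1..n}. if mu + unitv l \<in> S then tens (sc ((-1)^(d+1) * (-1)^card I) (Dx l u)) (I, mu + unitv l) else 0) = 0"
    using assms(2) by (intro sum.neutral) auto
  show ?thesis unfolding sigma_hom_def prod.case 1 2 by simp
qed


end

theorem lemma4p2:
  fixes m n :: nat and laurent :: bool
    and sc :: "complex \<Rightarrow> 'p::ab_group_add \<Rightarrow> 'p" and gam :: "'p \<Rightarrow> 'p"
    and T Ti Dt X Dx :: "nat \<Rightarrow> 'p \<Rightarrow> 'p"
    and lam :: "nat \<Rightarrow> complex"
  assumes mn: "m + n > 0"
    and P: "simple_weyl_super_module m n laurent sc gam T Ti Dt X Dx"
  shows "(\<forall>f \<in> Fspace m n lam. sigma m n lam sc gam Dt Dx (sigma m n lam sc gam Dt Dx f) = 0)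
       \<and> (\<forall>r \<in> {0..m}. (r \<noteq> m \<longrightarrow> (\<forall>j\<in>{1..n}. lam j = 0)) \<longrightarrow>
            ((\<forall>f \<in> FLspace m n r lam. sigma m n lam sc gam Dt Dx f = 0)
             \<longleftrightarrow> (r = m \<and> (\<forall>j\<in>{1..n}. lam j = -1))))"
proof -
  have WS: "weyl_super_module m n laurent sc gam T Ti Dt X Dx" and nz: "\<exists>u::'p. u \<noteq> 0"
    using P by (simp_all add: simple_weyl_super_module_def)
  have vs: "vector_space sc" using WS unfolding weyl_super_module_def by blast
  have lg: "Vector_Spaces.linear sc sc gam" using WS unfolding weyl_super_module_def by blast
  have ggam: "\<forall>u. gam (gam u) = u" using WS unfolding weyl_super_module_def by blast
  have lTD: "\<forall>i\<in>{1..m}. Vector_Spaces.linear sc sc (T i) \<and> Vector_Spaces.linear sc sc (Dt i)"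
    using WS unfolding weyl_super_module_def by blast
  have lXD: "\<forall>j\<in>{1..n}. Vector_Spaces.linear sc sc (X j) \<and> Vector_Spaces.linear sc sc (Dx j)"
    using WS unfolding weyl_super_module_def by blast
  have gT: "\<forall>i\<in>{1..m}. \<forall>u. gam (T i u) = T i (gam u) \<and> gam (Dt i u) = Dt i (gam u)"
    using WS unfolding weyl_super_module_def by blast
  have gX: "\<forall>j\<in>{1..n}. \<forall>u. gam (X j u) = - X j (gam u) \<and> gam (Dx j u) = - Dx j (gam u)"
    using WS unfolding weyl_super_module_def by blast
  have rT: "\<forall>i\<in>{1..m}. \<forall>k\<in>{1..m}. \<forall>u.
        T i (T k u) = T k (T i u) \<and> Dt i (Dt k u) = Dt k (Dt i u) \<and>
        Dt i (T k u) = T k (Dt i u) + (if i = k then u else 0)"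
    using WS unfolding weyl_super_module_def by blast
  have rX: "\<forall>j\<in>{1..n}. \<forall>l\<in>{1..n}. \<forall>u.
        X j (X l u) = - X l (X j u) \<and> Dx j (Dx l u) = - Dx l (Dx j u) \<and>
        Dx j (X l u) = - X l (Dx j u) + (if j = l then u else 0)"
    using WS unfolding weyl_super_module_def by blast
  have rTX: "\<forall>i\<in>{1..m}. \<forall>j\<in>{1..n}. \<forall>u.
        T i (X j u) = X j (T i u) \<and> T i (Dx j u) = Dx j (T i u) \<and>
        Dt i (X j u) = X j (Dt i u) \<and> Dt i (Dx j u) = Dx j (Dt i u)"
    using WS unfolding weyl_super_module_def by blast
  have f1: "\<And>x y. gam (x + y) = gam x + gam y" using lg by (simp add: Vector_Spaces.linear_iff)
  have f2: "\<And>c x. gam (sc c x) = sc c (gam x)" using lg by (simp add: Vector_Spaces.linear_iff)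
  have f3: "\<And>x. gam (gam x) = x" using ggam by simp
  have f4: "\<And>s x y. s \<in> {1..m} \<Longrightarrow> Dt s (x + y) = Dt s x + Dt s y" using lTD by (simp add: Vector_Spaces.linear_iff)
  have f5: "\<And>s c x. s \<in> {1..m} \<Longrightarrow> Dt s (sc c x) = sc c (Dt s x)" using lTD by (simp add: Vector_Spaces.linear_iff)
  have f6: "\<And>l x y. l \<in> {1..n} \<Longrightarrow> Dx l (x + y) = Dx l x + Dx l y" using lXD by (simp add: Vector_Spaces.linear_iff)
  have f7: "\<And>l c x. l \<in> {1..n} \<Longrightarrow> Dx l (sc c x) = sc c (Dx l x)" using lXD by (simp add: Vector_Spaces.linear_iff)
  have f8: "\<And>s x. s \<in> {1..m} \<Longrightarrow> gam (Dt s x) = Dt s (gam x)" using gT by simp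
  have f9: "\<And>l x. l \<in> {1..n} \<Longrightarrow> gam (Dx l x) = - Dx l (gam x)" using gX by simp
  have f10: "\<And>s s' x. s \<in> {1..m} \<Longrightarrow> s' \<in> {1..m} \<Longrightarrow> Dt s (Dt s' x) = Dt s' (Dt s x)" using rT by blast
  have f11: "\<And>l l' x. l \<in> {1..n} \<Longrightarrow> l' \<in> {1..n} \<Longrightarrow> Dx l (Dx l' x) = - Dx l' (Dx l x)" using rX by blast
  have f12: "\<And>s l x. s \<in> {1..m} \<Longrightarrow> l \<in> {1..n} \<Longrightarrow> Dt s (Dx l x) = Dx l (Dt s x)" using rTX by blast
  interpret W sc m n gam Dt Dx lam
    by (rule W.intro[OF vs], rule W_axioms.intro) (fact f1 f2 f3 f4 f5 f6 f7 f8 f9 f10 f11 f12)+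
  have T0: "T s 0 = 0" if "s \<in> {1..m}" for s
  proof -
    have "Vector_Spaces.linear sc sc (T s)" using lTD that by blast
    then have "\<forall>x y. T s (x + y) = T s x + T s y" by (simp add: Vector_Spaces.linear_iff)
    then have "T s (0 + 0) = T s 0 + T s 0" by blast
    then show ?thesis by simp
  qed
  have X0: "X l 0 = 0" if "l \<in> {1..n}" for l
  proof -
    have "Vector_Spaces.linear sc sc (X l)" using lXD that by blast
    then have "\<forall>x y. X l (x + y) = X l x + X l y" by (simp add: Vector_Spaces.linear_iff)
    then have "X l (0 + 0) = X l 0 + X l 0" by blast
    then show ?thesis by simp
  qed
  obtain w :: 'p where w: "w \<noteq> 0" using nz by blast
  have nzDt: "\<exists>v. Dt s v \<noteq> 0" if s: "s \<in> {1..m}" for s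
  proof (rule ccontr)
    assume "\<not> ?thesis" then have z: "\<forall>v. Dt s v = 0" by blast
    have "Dt s (T s w) = T s (Dt s w) + w" using rT s by auto
    then show False using z w T0[OF s] by simp
  qed
  have nzDx: "\<exists>v. Dx l v \<noteq> 0" if l: "l \<in> {1..n}" for l
  proof (rule ccontr)
    assume "\<not> ?thesis" then have z: "\<forall>v. Dx l v = 0" by blast
    have "Dx l (X l w) = - X l (Dx l w) + w" using rX l by auto
    then show False using z w X0[OF l] by simp
  qed
  have part1: "\<forall>f \<in> Fspace m n lam. sg (sg f) = 0" using sq_zero by blast
  have part2: "\<forall>r \<in> {0..m}. (r \<noteq> m \<longrightarrow> (\<forall>j\<in>{1..n}. lam j = 0)) \<longrightarrow>
            ((\<forall>f \<in> FLspace m n r lam. sg f = 0) \<longleftrightarrow> (r = m \<and> (\<forall>j\<in>{1..n}. lam j = -1)))"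
  proof (intro ballI impI, rule iffI)
    fix r assume r: "r \<in> {0..m}" and van: "\<forall>f\<in>FLspace m n r lam. sg f = 0"
    show "r = m \<and> (\<forall>j\<in>{1..n}. lam j = -1)"
    proof (rule ccontr)
      assume neg: "\<not> (r = m \<and> (\<forall>j\<in>{1..n}. lam j = -1))"
      show False
      proof (cases "r = m")
        case False
        then have rm: "r < m" "m \<in> {1..m}" using r by auto
        obtain v where "Dt m v \<noteq> 0" using nzDt[OF rm(2)] by auto
        then obtain u d where ud: "d \<le> 1" "gam u = sc ((-1)^d) u" "Dt m u \<noteq> 0"
          using hom_Dt[OF rm(2)] by blast
        define b where "b = ({1..r}, (0::nat \<Rightarrow> complex))"
        have bL: "b \<in> Lidx m n r lam" using False rm
          by (auto simp: b_def Lidx_def S_set_def Xset_def absv_def)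
        have fL: "tens u b \<in> FLspace m n r lam" using supp_tens[of u b] bL
          by (auto simp: FLspace_def)
        have "sg (tens u b) = sh u d b" by (rule sg_tens[OF ud(1,2)])
        moreover have "sh u d b (insert m {1..r}, 0) = sc (wsign m {1..r}) (Dt m u)"
          unfolding b_def by (rule eval_s) (use rm in auto)
        moreover have "sc (wsign m {1..r}) (Dt m u) \<noteq> 0" using ud(3) by (simp add: wsign_def)
        ultimately have "sg (tens u b) \<noteq> 0" by (metis zero_fun_apply)
        then show False using van fL by blast
      next
        case True
        then obtain j where j: "j \<in> {1..n}" "lam j \<noteq> -1" using neg by auto
        obtain v where "Dx j v \<noteq> 0" using nzDx[OF j(1)] by auto
        then obtain u d where ud: "d \<le> 1" "gam u = sc ((-1)^d) u" "Dx j u \<noteq> 0"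
          using hom_Dx[OF j(1)] by blast
        define mu0 where "mu0 = (\<lambda>k. if k \<in> {1..n} then lam k else 0)"
        define b where "b = ({1..m}, mu0)"
        have mu0S: "mu0 \<in> S_set n lam" by (auto simp: mu0_def S_set_def Xset_self)
        have ab: "absv n mu0 = absv n lam" unfolding absv_def mu0_def by (rule sum.cong) auto
        have bL: "b \<in> Lidx m n r lam" using True mu0S ab by (auto simp: b_def Lidx_def)
        have fL: "tens u b \<in> FLspace m n r lam" using supp_tens[of u b] bL
          by (auto simp: FLspace_def)
        have stepS: "mu0 + unitv j \<in> S_set n lam"
          unfolding S_set_def mem_Collect_eq
        proof (intro conjI ballI allI impI)
          fix k assume k: "k \<in> {1..n}"
          show "(mu0 + unitv j) k \<in> Xset (lam k)"
          proof (cases "k = j")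
            case True then show ?thesis using k j Xset_succ[OF j(2)] by (simp add: mu0_def unitv_def)
          next
            case False then show ?thesis using k by (simp add: mu0_def unitv_def Xset_self)
          qed
        next
          fix k assume k: "k \<notin> {1..n}"
          then have "k \<noteq> j" using j by auto
          then show "(mu0 + unitv j) k = 0" using k by (auto simp: mu0_def unitv_def)
        qed
        have "sg (tens u b) = sh u d b" by (rule sg_tens[OF ud(1,2)])
        moreover have "sh u d b ({1..m}, mu0 + unitv j) = sc ((-1)^(d+1) * (-1)^card {1..m}) (Dx j u)"
          unfolding b_def by (rule eval_l) (use j stepS in auto)
        moreover have "sc ((-1)^(d+1) * (-1)^card {1..m}) (Dx j u) \<noteq> 0" using ud(3) by simp
        ultimately have "sg (tens u b) \<noteq> 0" by (metis zero_fun_apply)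
        then show False using van fL by blast
      qed
    qed
  next
    fix r assume r: "r \<in> {0..m}" and c: "r = m \<and> (\<forall>j\<in>{1..n}. lam j = -1)"
    show "\<forall>f\<in>FLspace m n r lam. sg f = 0"
    proof
      fix f :: "bidx \<Rightarrow> 'p" assume f: "f \<in> FLspace m n r lam"
      have "sg f = (\<Sum>b\<in>supp f. H f b)" by (rule sg_eq) (use f in \<open>auto simp: FLspace_def\<close>)
      also have "\<dots> = 0"
      proof (rule sum.neutral, rule ballI)
        fix b assume "b \<in> supp f"
        then have bL: "b \<in> Lidx m n m lam" using f c by (auto simp: FLspace_def)
        obtain I mu where b: "b = (I, mu)" by force
        have "I = {1..m} \<and> (\<forall>l\<in>{1..n}. mu + unitv l \<notin> S)"
          using Lidx_m1[of n lam I mu m] c bL b by auto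
        then show "H f b = 0" unfolding H_def b by (simp add: sh_vanish)
      qed
      finally show "sg f = 0" .
    qed
  qed
  show ?thesis using part1 part2 by blast
qed

end
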